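(* Let $U=(U_{ij})_{i,j=1}^M$, $U_{ij}\in M_M(\mathbb C)$, and $V=(V_{ab})_{a,b=1}^N$, $V_{ab}\in M_N(\mathbb C)$, be projective models, such that $U$ and $V'$ are positive. Let $Q\in M_{M\times N}(\mathbb T)$ and $W=U\otimes_QV$. Then for all integers $p,r\geq1$, $$|c_p^r(W)|\leq c_p^r(U)\,c_p^r(V).$$
   Context: A square matrix $(P_{ij})$ with entries in a $C^*$-algebra is magic if all $P_{ij}$ are orthogonal projections and each row and each column sums to $1$. For $U=(U_{ij})_{i,j=1}^n$ with $U_{ij}\in M_n(\mathbb C)$, define $U'=(U'_{kl})$ by $(U'_{kl})_{ij}=(U_{ij})_{kl}$. $U$ is a projective model if both $U$ and $U'$ are magic. $U$ is positive if $tr(U_{i_1j_1}\cdots U_{i_pj_p})\geq0$ for all $p$ and all indices, where $tr$ is the normalized trace on $M_n(\mathbb C)$. $T_p^U\in M_{n^p}(\mathbb C)$ has entries $(T_p^U)_{i_1\dots i_p,j_1\dots j_p}=tr(U_{i_1j_1}\cdots U_{i_pj_p})$, and $c_p^r(U)=Tr((T_p^U)^r)$ (non-normalized trace). The deformed tensor product $W=U\otimes_QV$ is the $MN\times MN$ matrix with entries in $M_{MN}(\mathbb C)$ given by $(W_{ia,jb})_{kc,ld}=\frac{Q_{ic}Q_{jd}}{Q_{id}Q_{jc}}(U_{ij})_{kl}(V_{ab})_{cd}$, $i,j,k,l\in\{1,\dots,M\}$, $a,b,c,d\in\{1,\dots,N\}$. *)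

theory Defs
  imports Complex_Main
begin

text \<open>Square complex matrices of size n are represented as functions
  nat \<Rightarrow> nat \<Rightarrow> complex, only entries with indices below n matter.
  A matrix U = (U_ij) with U_ij in M_n(C) is a function
  U :: nat \<Rightarrow> nat \<Rightarrow> nat \<Rightarrow> nat \<Rightarrow> complex with U i j k l = (U_ij)_kl.\<close>

type_synonym cmat = "nat \<Rightarrow> nat \<Rightarrow> complex"
type_synonym bmat = "nat \<Rightarrow> nat \<Rightarrow> nat \<Rightarrow> nat \<Rightarrow> complex"

definition mmult :: "nat \<Rightarrow> cmat \<Rightarrow> cmat \<Rightarrow> cmat" where
  "mmult n A B = (\<lambda>k l. \<Sum>m<n. A k m * B m l)"

definition mid :: cmat where
  "mid = (\<lambda>k l. if k = l then 1 else 0)"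

definition mat_eq :: "nat \<Rightarrow> cmat \<Rightarrow> cmat \<Rightarrow> bool" where
  "mat_eq n A B \<longleftrightarrow> (\<forall>k<n. \<forall>l<n. A k l = B k l)"

definition is_orth_proj :: "nat \<Rightarrow> cmat \<Rightarrow> bool" where
  "is_orth_proj n P \<longleftrightarrow> mat_eq n (mmult n P P) P \<and> (\<forall>k<n. \<forall>l<n. cnj (P l k) = P k l)"

definition magic :: "nat \<Rightarrow> nat \<Rightarrow> bmat \<Rightarrow> bool" where
  "magic n m U \<longleftrightarrow>
     (\<forall>i<n. \<forall>j<n. is_orth_proj m (U i j)) \<and>
     (\<forall>i<n. mat_eq m (\<lambda>k l. \<Sum>j<n. U i j k l) mid) \<and>
     (\<forall>j<n. mat_eq m (\<lambda>k l. \<Sum>i<n. U i j k l) mid)"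

definition prime_model :: "bmat \<Rightarrow> bmat" where
  "prime_model U = (\<lambda>k l i j. U i j k l)"

definition projective_model :: "nat \<Rightarrow> bmat \<Rightarrow> bool" where
  "projective_model n U \<longleftrightarrow> magic n n U \<and> magic n n (prime_model U)"

definition mprod_list :: "nat \<Rightarrow> cmat list \<Rightarrow> cmat" where
  "mprod_list n As = foldr (mmult n) As mid"

definition ntr :: "nat \<Rightarrow> cmat \<Rightarrow> complex" where
  "ntr n A = (\<Sum>k<n. A k k) / of_nat n"

definition trword :: "nat \<Rightarrow> bmat \<Rightarrow> nat list \<Rightarrow> nat list \<Rightarrow> complex" where
  "trword n U is js = ntr n (mprod_list n (map (\<lambda>(i, j). U i j) (zip is js)))"

definition idx :: "nat \<Rightarrow> nat \<Rightarrow> nat list set" where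
  "idx n p = {xs. length xs = p \<and> set xs \<subseteq> {..<n}}"

definition positive_model :: "nat \<Rightarrow> bmat \<Rightarrow> bool" where
  "positive_model n U \<longleftrightarrow>
     (\<forall>p. \<forall>is\<in>idx n p. \<forall>js\<in>idx n p. trword n U is js \<in> \<real> \<and> 0 \<le> Re (trword n U is js))"

definition Tp :: "nat \<Rightarrow> bmat \<Rightarrow> nat \<Rightarrow> nat list \<Rightarrow> nat list \<Rightarrow> complex" where
  "Tp n U p = trword n U"

fun set_mpow :: "'a set \<Rightarrow> ('a \<Rightarrow> 'a \<Rightarrow> complex) \<Rightarrow> nat \<Rightarrow> ('a \<Rightarrow> 'a \<Rightarrow> complex)" where
  "set_mpow S T 0 = (\<lambda>x y. if x = y then 1 else 0)"
| "set_mpow S T (Suc r) = (\<lambda>x y. \<Sum>z\<in>S. set_mpow S T r x z * T z y)"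

text \<open>c_p^r(U) = Tr((T_p^U)^r), non-normalized trace.\<close>
definition cpr :: "nat \<Rightarrow> bmat \<Rightarrow> nat \<Rightarrow> nat \<Rightarrow> complex" where
  "cpr n U p r = (\<Sum>I\<in>idx n p. set_mpow (idx n p) (Tp n U p) r I I)"

text \<open>Deformed tensor product; the index (i,a), i<M, a<N is encoded as i*N+a.\<close>
definition deformed_tensor :: "nat \<Rightarrow> nat \<Rightarrow> (nat \<Rightarrow> nat \<Rightarrow> complex) \<Rightarrow> bmat \<Rightarrow> bmat \<Rightarrow> bmat" where
  "deformed_tensor M N Q U V = (\<lambda>x y z w.
     let i = x div N; a = x mod N; j = y div N; b = y mod N;
         k = z div N; c = z mod N; l = w div N; d = w mod N
     in Q i c * Q j d / (Q i d * Q j c) * U i j k l * V a b c d)"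

end

theory Submission
  imports Defs "HOL-Library.FuncSet" "HOL-Library.Complex_Order"
begin

fun gpow :: "'a set \<Rightarrow> (nat \<Rightarrow> 'a \<Rightarrow> 'a \<Rightarrow> complex) \<Rightarrow> nat \<Rightarrow> 'a \<Rightarrow> 'a \<Rightarrow> complex" where
  "gpow S A 0 = (\<lambda>x y. if x = y then 1 else 0)"
| "gpow S A (Suc r) = (\<lambda>x y. \<Sum>z\<in>S. gpow S A r x z * A r z y)"

lemma sum_PiE_Suc:
  fixes F :: "(nat \<Rightarrow> 'a) \<Rightarrow> complex"
  assumes "finite S"
  shows "(\<Sum>g\<in>{..<Suc n} \<rightarrow>\<^sub>E S. F g) = (\<Sum>f\<in>{..<n} \<rightarrow>\<^sub>E S. \<Sum>w\<in>S. F (f(n:=w)))"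
proof -
  have "(\<Sum>g\<in>{..<Suc n} \<rightarrow>\<^sub>E S. F g) = (\<Sum>(w,f)\<in>S \<times> ({..<n} \<rightarrow>\<^sub>E S). F (f(n:=w)))"
    by (intro sum.reindex_bij_witness[of _ "\<lambda>(y,g). g(n := y)" "\<lambda>g. (g n, g(n := undefined))"])
       (auto simp: PiE_def extensional_def Pi_def less_Suc_eq)
  also have "\<dots> = (\<Sum>w\<in>S. \<Sum>f\<in>{..<n} \<rightarrow>\<^sub>E S. F (f(n:=w)))"
    by (subst sum.cartesian_product) auto
  also have "\<dots> = (\<Sum>f\<in>{..<n} \<rightarrow>\<^sub>E S. \<Sum>w\<in>S. F (f(n:=w)))"
    by (rule sum.swap)
  finally show ?thesis .
qed

lemma delta_sum:
  assumes "finite S" "x \<in> S"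
  shows "(\<Sum>w\<in>S. (if w = x then 1 else 0) * g w) = (g x :: complex)"
proof -
  have "(\<Sum>w\<in>S. (if w = x then 1 else 0) * g w) = (\<Sum>w\<in>S. if w = x then g w else 0)"
    by (intro sum.cong) auto
  also have "\<dots> = g x" using assms by (simp add: sum.delta')
  finally show ?thesis .
qed

lemma gpow_open:
  assumes "finite S" "x \<in> S" "y \<in> S"
  shows "gpow S A r x y = (\<Sum>f\<in>{..<Suc r} \<rightarrow>\<^sub>E S. (if f 0 = x then 1 else 0) *
            (\<Prod>t<r. A t (f t) (f (Suc t))) * (if f r = y then 1 else 0))"
  using assms(3)
proof (induction r arbitrary: y)
  case 0
  let ?F = "\<lambda>f. (if f 0 = x then 1 else 0) *
            (\<Prod>t<0. A t (f t) (f (Suc t))) * (if f 0 = y then 1 else (0::complex))"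
  have e: "{..<0::nat} \<rightarrow>\<^sub>E S = {\<lambda>_. undefined}" by auto
  have "(\<Sum>f\<in>{..<Suc 0} \<rightarrow>\<^sub>E S. ?F f) = (\<Sum>f\<in>{..<0} \<rightarrow>\<^sub>E S. \<Sum>w\<in>S. ?F (f(0:=w)))"
    by (rule sum_PiE_Suc[OF assms(1)])
  also have "\<dots> = (\<Sum>w\<in>S. ?F ((\<lambda>_. undefined)(0:=w)))" unfolding e by simp
  also have "\<dots> = (\<Sum>w\<in>S. (if w = x then 1 else 0) * (if w = y then 1 else 0))" by simp
  also have "\<dots> = (if x = y then 1 else 0)"
    using assms 0 by (simp add: delta_sum)
  finally show ?case by simp
next
  case (Suc r)
  let ?P = "\<lambda>f. (if f 0 = x then 1 else 0) * (\<Prod>t<r. A t (f t) (f (Suc t)))"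
  have "gpow S A (Suc r) x y = (\<Sum>z\<in>S. (\<Sum>f\<in>{..<Suc r} \<rightarrow>\<^sub>E S. ?P f * (if f r = z then 1 else 0)) * A r z y)"
    using Suc by simp
  also have "\<dots> = (\<Sum>f\<in>{..<Suc r} \<rightarrow>\<^sub>E S. \<Sum>z\<in>S. ?P f * ((if f r = z then 1 else 0) * A r z y))"
    by (simp add: sum_distrib_right sum.swap[of _ S] mult.assoc)
  also have "\<dots> = (\<Sum>f\<in>{..<Suc r} \<rightarrow>\<^sub>E S. ?P f * A r (f r) y)"
  proof (rule sum.cong[OF refl])
    fix f assume f: "f \<in> {..<Suc r} \<rightarrow>\<^sub>E S"
    hence fr: "f r \<in> S" by auto
    have "(\<Sum>z\<in>S. ?P f * ((if f r = z then 1 else 0) * A r z y)) = ?P f * (\<Sum>z\<in>S. (if z = f r then 1 else 0) * A r z y)"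
      by (subst sum_distrib_left) (intro sum.cong, auto)
    then show "(\<Sum>z\<in>S. ?P f * ((if f r = z then 1 else 0) * A r z y)) = ?P f * A r (f r) y"
      using delta_sum[OF assms(1) fr] by simp
  qed
  also have "\<dots> = (\<Sum>f\<in>{..<Suc r} \<rightarrow>\<^sub>E S. \<Sum>w\<in>S. (if (f(Suc r := w)) 0 = x then 1 else 0) *
            (\<Prod>t<Suc r. A t ((f(Suc r := w)) t) ((f(Suc r := w)) (Suc t))) * (if (f(Suc r := w)) (Suc r) = y then 1 else 0))"
  proof (rule sum.cong[OF refl])
    fix f assume "f \<in> {..<Suc r} \<rightarrow>\<^sub>E S"
    have e: "(\<Prod>t<Suc r. A t ((f(Suc r := w)) t) ((f(Suc r := w)) (Suc t))) =
             (\<Prod>t<r. A t (f t) (f (Suc t))) * A r (f r) w" for w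
      unfolding prod.lessThan_Suc by (auto intro!: prod.cong)
    show "?P f * A r (f r) y = (\<Sum>w\<in>S. (if (f(Suc r := w)) 0 = x then 1 else 0) *
            (\<Prod>t<Suc r. A t ((f(Suc r := w)) t) ((f(Suc r := w)) (Suc t))) * (if (f(Suc r := w)) (Suc r) = y then 1 else 0))"
      unfolding e using Suc.prems assms(1) by (simp add: if_distrib[of "\<lambda>z. _ * z"] sum.delta' cong: if_cong)
  qed
  finally have *: "gpow S A (Suc r) x y = \<dots>" .
  show ?case by (subst sum_PiE_Suc[OF assms(1)]) (rule *)
qed

lemma gpow_trace:
  assumes S: "finite S" and r: "0 < r"
  shows "(\<Sum>x\<in>S. gpow S A r x x) = (\<Sum>h\<in>{..<r} \<rightarrow>\<^sub>E S. \<Prod>t<r. A t (h t) (h (Suc t mod r)))"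
proof -
  let ?P = "\<lambda>f. (\<Prod>t<r. A t (f t) (f (Suc t)))"
  have "(\<Sum>x\<in>S. gpow S A r x x) = (\<Sum>x\<in>S. \<Sum>f\<in>{..<Suc r} \<rightarrow>\<^sub>E S. (if f 0 = x then 1 else 0) * ?P f * (if f r = x then 1 else 0))"
    using S by (intro sum.cong refl gpow_open) auto
  also have "\<dots> = (\<Sum>f\<in>{..<Suc r} \<rightarrow>\<^sub>E S. \<Sum>x\<in>S. (if x = f 0 then 1 else 0) * (?P f * (if f r = x then 1 else 0)))"
    by (subst sum.swap) (intro sum.cong refl, auto)
  also have "\<dots> = (\<Sum>f\<in>{..<Suc r} \<rightarrow>\<^sub>E S. (if f r = f 0 then ?P f else 0))"
  proof (rule sum.cong[OF refl])
    fix f assume "f \<in> {..<Suc r} \<rightarrow>\<^sub>E S"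
    hence "f 0 \<in> S" by auto
    from delta_sum[OF S this] show "(\<Sum>x\<in>S. (if x = f 0 then 1 else 0) * (?P f * (if f r = x then 1 else 0))) = (if f r = f 0 then ?P f else 0)"
      by simp
  qed
  also have "\<dots> = (\<Sum>h\<in>{..<r} \<rightarrow>\<^sub>E S. \<Sum>w\<in>S. (if w = h 0 then ?P (h(r:=w)) else 0))"
    using r by (subst sum_PiE_Suc[OF S]) (intro sum.cong refl, auto)
  also have "\<dots> = (\<Sum>h\<in>{..<r} \<rightarrow>\<^sub>E S. ?P (h(r:=h 0)))"
  proof (rule sum.cong[OF refl])
    fix h assume "h \<in> {..<r} \<rightarrow>\<^sub>E S"
    hence "h 0 \<in> S" using r by auto
    then show "(\<Sum>w\<in>S. (if w = h 0 then ?P (h(r:=w)) else 0)) = ?P (h(r:=h 0))"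
      using S by (simp add: sum.delta')
  qed
  also have "\<dots> = (\<Sum>h\<in>{..<r} \<rightarrow>\<^sub>E S. \<Prod>t<r. A t (h t) (h (Suc t mod r)))"
  proof (intro sum.cong refl prod.cong)
    fix h t assume "t \<in> {..<r}"
    then show "A t ((h(r:=h 0)) t) ((h(r:=h 0)) (Suc t)) = A t (h t) (h (Suc t mod r))"
      by (cases "Suc t = r") auto
  qed
  finally show ?thesis .
qed

lemma set_mpow_gpow: "set_mpow S T r = gpow S (\<lambda>_. T) r"
  by (induction r) auto

lemma mprod_snoc:
  assumes "k < n" "l < n"
  shows "mprod_list n (As @ [B]) k l = mmult n (mprod_list n As) B k l"
  using assms
proof (induction As arbitrary: k)
  case Nil
  have "mmult n B mid k l = B k l" using Nil by (simp add: mmult_def mid_def if_distrib[of "\<lambda>z. _ * z"] sum.delta cong: if_cong)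
  moreover have "mmult n mid B k l = B k l" using Nil by (simp add: mmult_def mid_def if_distrib[of "\<lambda>z. z * _"] sum.delta' cong: if_cong)
  ultimately show ?case by (simp add: mprod_list_def)
next
  case (Cons A As)
  have "mprod_list n ((A # As) @ [B]) k l = (\<Sum>m<n. A k m * mprod_list n (As @ [B]) m l)"
    by (simp add: mprod_list_def mmult_def)
  also have "\<dots> = (\<Sum>m<n. A k m * mmult n (mprod_list n As) B m l)"
    using Cons by (intro sum.cong refl) auto
  also have "\<dots> = (\<Sum>m<n. \<Sum>q<n. A k m * (mprod_list n As m q * B q l))"
    by (simp add: mmult_def sum_distrib_left)
  also have "\<dots> = (\<Sum>q<n. \<Sum>m<n. A k m * (mprod_list n As m q * B q l))"
    by (rule sum.swap)
  also have "\<dots> = mmult n (mprod_list n (A # As)) B k l"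
    by (simp add: mprod_list_def mmult_def sum_distrib_right mult.assoc)
  finally show ?case .
qed

lemma mprod_gpow:
  assumes "k < n" "l < n"
  shows "mprod_list n As k l = gpow {..<n} (\<lambda>t. As ! t) (length As) k l"
  using assms
proof (induction As arbitrary: l rule: rev_induct)
  case Nil
  then show ?case by (simp add: mprod_list_def mid_def)
next
  case (snoc B As)
  have "mprod_list n (As @ [B]) k l = (\<Sum>z<n. mprod_list n As k z * B z l)"
    using snoc by (simp add: mprod_snoc mmult_def)
  also have "\<dots> = (\<Sum>z<n. gpow {..<n} (\<lambda>t. As ! t) (length As) k z * B z l)"
    using snoc by (intro sum.cong refl) auto
  also have "\<dots> = gpow {..<n} (\<lambda>t. (As @ [B]) ! t) (length (As @ [B])) k l"
  proof -
    have g: "gpow {..<n} (\<lambda>t. (As @ [B]) ! t) m = gpow {..<n} (\<lambda>t. As ! t) m" if "m \<le> length As" for m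
      using that by (induction m) (auto simp: nth_append)
    show ?thesis by (simp add: g)
  qed
  finally show ?case .
qed

lemma tr_mprod:
  assumes "0 < length As"
  shows "(\<Sum>k<n. mprod_list n As k k) = (\<Sum>h\<in>{..<length As} \<rightarrow>\<^sub>E {..<n}. \<Prod>t<length As. (As!t) (h t) (h (Suc t mod length As)))"
proof -
  have "(\<Sum>k<n. mprod_list n As k k) = (\<Sum>k<n. gpow {..<n} (\<lambda>t. As ! t) (length As) k k)"
    by (intro sum.cong refl mprod_gpow) auto
  also have "\<dots> = (\<Sum>h\<in>{..<length As} \<rightarrow>\<^sub>E {..<n}. \<Prod>t<length As. (As!t) (h t) (h (Suc t mod length As)))"
    by (rule gpow_trace) (use assms in auto)
  finally show ?thesis .
qed

lemma Tp_formula: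
  assumes "length is = p" "length js = p" "0 < p"
  shows "Tp n U p is js = (\<Sum>h\<in>{..<p} \<rightarrow>\<^sub>E {..<n}. \<Prod>s<p. U (is!s) (js!s) (h s) (h (Suc s mod p))) / of_nat n"
proof -
  let ?As = "map (\<lambda>(i, j). U i j) (zip is js)"
  have l: "length ?As = p" using assms by simp
  have "Tp n U p is js = (\<Sum>k<n. mprod_list n ?As k k) / of_nat n"
    by (simp add: Tp_def trword_def ntr_def)
  also have "\<dots> = (\<Sum>h\<in>{..<p} \<rightarrow>\<^sub>E {..<n}. \<Prod>s<p. U (is!s) (js!s) (h s) (h (Suc s mod p))) / of_nat n"
  proof -
    have pos: "0 < length ?As" using l assms by simp
    show ?thesis unfolding tr_mprod[OF pos] l
    proof (intro arg_cong[where f="\<lambda>x. x / of_nat n"] sum.cong refl prod.cong)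
      fix h x assume "x \<in> {..<p}"
      then show "(?As ! x) (h x) (h (Suc x mod p)) = U (is!x) (js!x) (h x) (h (Suc x mod p))"
        using assms by simp
    qed

  qed
  finally show ?thesis .
qed

lemma finite_idx: "finite (idx n p)"
proof -
  have "idx n p = {xs. set xs \<subseteq> {..<n} \<and> length xs = p}" by (auto simp: idx_def)
  then show ?thesis using finite_lists_length_eq[of "{..<n}" p] by simp
qed

lemma cpr_formula:
  assumes "0 < r"
  shows "cpr n U p r = (\<Sum>F\<in>{..<r} \<rightarrow>\<^sub>E idx n p. \<Prod>t<r. Tp n U p (F t) (F (Suc t mod r)))"
  unfolding cpr_def set_mpow_gpow using gpow_trace[OF finite_idx assms] by simp

lemma transpose_sum:
  fixes H :: "nat \<Rightarrow> nat \<Rightarrow> nat \<Rightarrow> nat \<Rightarrow> complex"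
  assumes r: "0 < r"
  shows "(\<Sum>A\<in>{..<r} \<rightarrow>\<^sub>E idx N p. \<Prod>t<r. \<Prod>s<p. H t s (A t ! s) (A (Suc t mod r) ! s))
       = (\<Prod>s<p. \<Sum>\<alpha>\<in>{..<r} \<rightarrow>\<^sub>E {..<N}. \<Prod>t<r. H t s (\<alpha> t) (\<alpha> (Suc t mod r)))"
proof -
  have "(\<Prod>s<p. \<Sum>\<alpha>\<in>{..<r} \<rightarrow>\<^sub>E {..<N}. \<Prod>t<r. H t s (\<alpha> t) (\<alpha> (Suc t mod r)))
     = (\<Sum>\<beta>\<in>{..<p} \<rightarrow>\<^sub>E ({..<r} \<rightarrow>\<^sub>E {..<N}). \<Prod>s<p. \<Prod>t<r. H t s (\<beta> s t) (\<beta> s (Suc t mod r)))"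
    by (rule prod_sum_PiE) (auto intro: finite_PiE)
  also have "\<dots> = (\<Sum>A\<in>{..<r} \<rightarrow>\<^sub>E idx N p. \<Prod>t<r. \<Prod>s<p. H t s (A t ! s) (A (Suc t mod r) ! s))"
  proof (rule sum.reindex_bij_witness[where i="\<lambda>A. (\<lambda>s\<in>{..<p}. \<lambda>t\<in>{..<r}. A t ! s)"
        and j="\<lambda>\<beta>. (\<lambda>t\<in>{..<r}. map (\<lambda>s. \<beta> s t) [0..<p])"])
    fix \<beta> assume b: "\<beta> \<in> {..<p} \<rightarrow>\<^sub>E ({..<r} \<rightarrow>\<^sub>E {..<N})"
    show "(\<lambda>s\<in>{..<p}. \<lambda>t\<in>{..<r}. (\<lambda>t\<in>{..<r}. map (\<lambda>s. \<beta> s t) [0..<p]) t ! s) = \<beta>"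
    proof (rule ext)
      fix s show "(\<lambda>s\<in>{..<p}. \<lambda>t\<in>{..<r}. (\<lambda>t\<in>{..<r}. map (\<lambda>s. \<beta> s t) [0..<p]) t ! s) s = \<beta> s"
      proof (cases "s < p")
        case True
        then show ?thesis using b by (auto simp: PiE_iff extensional_def)
      next
        case False
        then show ?thesis using b by (auto simp: PiE_iff extensional_def)
      qed
    qed
    show "(\<lambda>t\<in>{..<r}. map (\<lambda>s. \<beta> s t) [0..<p]) \<in> {..<r} \<rightarrow>\<^sub>E idx N p"
      using b by (auto simp: idx_def PiE_iff)
    have c: "(\<lambda>t\<in>{..<r}. map (\<lambda>s. \<beta> s t) [0..<p]) (Suc t mod r) ! s = \<beta> s (Suc t mod r)" if "s < p" for s t
      using that r by simp
    show "(\<Prod>t<r. \<Prod>s<p. H t s ((\<lambda>t\<in>{..<r}. map (\<lambda>s. \<beta> s t) [0..<p]) t ! s)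
            ((\<lambda>t\<in>{..<r}. map (\<lambda>s. \<beta> s t) [0..<p]) (Suc t mod r) ! s)) =
          (\<Prod>s<p. \<Prod>t<r. H t s (\<beta> s t) (\<beta> s (Suc t mod r)))"
      by (subst prod.swap) (intro prod.cong refl, simp add: c)
  next
    fix A assume A: "A \<in> {..<r} \<rightarrow>\<^sub>E idx N p"
    show "(\<lambda>t\<in>{..<r}. map (\<lambda>s. (\<lambda>s\<in>{..<p}. \<lambda>t\<in>{..<r}. A t ! s) s t) [0..<p]) = A"
    proof (rule ext)
      fix t show "(\<lambda>t\<in>{..<r}. map (\<lambda>s. (\<lambda>s\<in>{..<p}. \<lambda>t\<in>{..<r}. A t ! s) s t) [0..<p]) t = A t"
      proof (cases "t < r")
        case True
        then have "length (A t) = p" using A by (auto simp: idx_def)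
        then show ?thesis using True by (auto intro: nth_equalityI)
      next
        case False
        then show ?thesis using A by (auto simp: PiE_iff extensional_def)
      qed
    qed
    show "(\<lambda>s\<in>{..<p}. \<lambda>t\<in>{..<r}. A t ! s) \<in> {..<p} \<rightarrow>\<^sub>E ({..<r} \<rightarrow>\<^sub>E {..<N})"
      using A by (fastforce simp: idx_def PiE_iff dest: nth_mem)
  qed
  finally show ?thesis by simp
qed

lemma enc_less: "i < M \<Longrightarrow> a < N \<Longrightarrow> i * N + a < M * (N::nat)"
proof -
  assume "i < M" "a < N"
  then have "i * N + a < Suc i * N" by simp
  also have "\<dots> \<le> M * N" using \<open>i < M\<close> by (intro mult_le_mono1) simp
  finally show ?thesis .
qed

lemma enc_div: "a < N \<Longrightarrow> (i * N + a) div N = (i::nat)"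
  by simp

lemma enc_mod: "a < N \<Longrightarrow> (i * N + a) mod N = (a::nat)"
  by simp

definition comb :: "nat \<Rightarrow> nat list \<Rightarrow> nat list \<Rightarrow> nat list" where
  "comb N xs ys = map (\<lambda>(i, a). i * N + a) (zip xs ys)"

lemma comb_length[simp]: "length (comb N xs ys) = min (length xs) (length ys)"
  by (simp add: comb_def)

lemma comb_nth[simp]: "k < length xs \<Longrightarrow> k < length ys \<Longrightarrow> comb N xs ys ! k = xs ! k * N + ys ! k"
  by (simp add: comb_def)

lemma pair_fun_sum:
  fixes g :: "(nat \<Rightarrow> nat) \<Rightarrow> complex"
  assumes N: "0 < N"
  shows "(\<Sum>\<kappa>\<in>D \<rightarrow>\<^sub>E {..<M*N}. g \<kappa>) =
         (\<Sum>(\<kappa>1,\<kappa>2)\<in>(D \<rightarrow>\<^sub>E {..<M}) \<times> (D \<rightarrow>\<^sub>E {..<N}). g (\<lambda>s\<in>D. \<kappa>1 s * N + \<kappa>2 s))"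
proof (rule sym, rule sum.reindex_bij_witness[where j="\<lambda>(\<kappa>1,\<kappa>2). (\<lambda>s\<in>D. \<kappa>1 s * N + \<kappa>2 s)"
      and i="\<lambda>\<kappa>. (\<lambda>s\<in>D. \<kappa> s div N, \<lambda>s\<in>D. \<kappa> s mod N)"])
  fix a assume a: "a \<in> (D \<rightarrow>\<^sub>E {..<M}) \<times> (D \<rightarrow>\<^sub>E {..<N})"
  obtain k1 k2 where a': "a = (k1, k2)" by (cases a)
  show "(\<lambda>\<kappa>. (\<lambda>s\<in>D. \<kappa> s div N, \<lambda>s\<in>D. \<kappa> s mod N)) ((\<lambda>(\<kappa>1,\<kappa>2). (\<lambda>s\<in>D. \<kappa>1 s * N + \<kappa>2 s)) a) = a"
    using a unfolding a' by (auto simp: PiE_iff extensional_def fun_eq_iff)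
  show "(\<lambda>(\<kappa>1,\<kappa>2). (\<lambda>s\<in>D. \<kappa>1 s * N + \<kappa>2 s)) a \<in> D \<rightarrow>\<^sub>E {..<M*N}"
    using a unfolding a' by (auto simp: PiE_iff intro: enc_less)
  show "g ((\<lambda>(\<kappa>1,\<kappa>2). (\<lambda>s\<in>D. \<kappa>1 s * N + \<kappa>2 s)) a) = (case a of (\<kappa>1,\<kappa>2) \<Rightarrow> g (\<lambda>s\<in>D. \<kappa>1 s * N + \<kappa>2 s))"
    unfolding a' by simp
next
  fix b assume b: "b \<in> D \<rightarrow>\<^sub>E {..<M*N}"
  show "(\<lambda>(\<kappa>1,\<kappa>2). (\<lambda>s\<in>D. \<kappa>1 s * N + \<kappa>2 s)) ((\<lambda>\<kappa>. (\<lambda>s\<in>D. \<kappa> s div N, \<lambda>s\<in>D. \<kappa> s mod N)) b) = b"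
    using b by (auto simp: PiE_iff extensional_def fun_eq_iff)
  show "(\<lambda>\<kappa>. (\<lambda>s\<in>D. \<kappa> s div N, \<lambda>s\<in>D. \<kappa> s mod N)) b \<in> (D \<rightarrow>\<^sub>E {..<M}) \<times> (D \<rightarrow>\<^sub>E {..<N})"
    using b N by (auto simp: PiE_iff less_mult_imp_div_less)
qed

lemma pair_idx_sum:
  fixes g :: "(nat \<Rightarrow> nat list) \<Rightarrow> complex"
  assumes N: "0 < N"
  shows "(\<Sum>X\<in>D \<rightarrow>\<^sub>E idx (M*N) p. g X) =
         (\<Sum>(I,A)\<in>(D \<rightarrow>\<^sub>E idx M p) \<times> (D \<rightarrow>\<^sub>E idx N p). g (\<lambda>t\<in>D. comb N (I t) (A t)))"
proof (rule sym, rule sum.reindex_bij_witness[where j="\<lambda>(I,A). (\<lambda>t\<in>D. comb N (I t) (A t))"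
      and i="\<lambda>X. (\<lambda>t\<in>D. map (\<lambda>x. x div N) (X t), \<lambda>t\<in>D. map (\<lambda>x. x mod N) (X t))"])
  fix a assume a: "a \<in> (D \<rightarrow>\<^sub>E idx M p) \<times> (D \<rightarrow>\<^sub>E idx N p)"
  obtain I A where a': "a = (I, A)" by (cases a)
  have lI: "length (I t) = p" "length (A t) = p" "set (I t) \<subseteq> {..<M}" "set (A t) \<subseteq> {..<N}" if "t \<in> D" for t
    using a that unfolding a' by (auto simp: idx_def)
  have e1: "map (\<lambda>x. x div N) (comb N (I t) (A t)) = I t" if "t \<in> D" for t
  proof (rule nth_equalityI)
    fix k assume "k < length (map (\<lambda>x. x div N) (comb N (I t) (A t)))"
    then have k: "k < p" using lI[OF that] by simp
    then have "A t ! k < N" using lI[OF that] nth_mem[of k "A t"] by (auto simp: subset_iff)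
    then show "map (\<lambda>x. x div N) (comb N (I t) (A t)) ! k = I t ! k" using k lI[OF that] by simp
  qed (use lI[OF that] in simp)
  have e2: "map (\<lambda>x. x mod N) (comb N (I t) (A t)) = A t" if "t \<in> D" for t
  proof (rule nth_equalityI)
    fix k assume "k < length (map (\<lambda>x. x mod N) (comb N (I t) (A t)))"
    then have k: "k < p" using lI[OF that] by simp
    then have "A t ! k < N" using lI[OF that] nth_mem[of k "A t"] by (auto simp: subset_iff)
    then show "map (\<lambda>x. x mod N) (comb N (I t) (A t)) ! k = A t ! k" using k lI[OF that] by simp
  qed (use lI[OF that] in simp)
  show "(\<lambda>X. (\<lambda>t\<in>D. map (\<lambda>x. x div N) (X t), \<lambda>t\<in>D. map (\<lambda>x. x mod N) (X t))) ((\<lambda>(I,A). (\<lambda>t\<in>D. comb N (I t) (A t))) a) = a"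
    using a e1 e2 unfolding a' by (auto simp: PiE_iff extensional_def fun_eq_iff)
  show "(\<lambda>(I,A). (\<lambda>t\<in>D. comb N (I t) (A t))) a \<in> D \<rightarrow>\<^sub>E idx (M*N) p"
    using lI unfolding a' by (fastforce simp: idx_def PiE_iff set_conv_nth intro!: enc_less)
  show "g ((\<lambda>(I,A). (\<lambda>t\<in>D. comb N (I t) (A t))) a) = (case a of (I,A) \<Rightarrow> g (\<lambda>t\<in>D. comb N (I t) (A t)))"
    unfolding a' by simp
next
  fix b assume b: "b \<in> D \<rightarrow>\<^sub>E idx (M*N) p"
  have e: "comb N (map (\<lambda>x. x div N) (b t)) (map (\<lambda>x. x mod N) (b t)) = b t" for t
    by (intro nth_equalityI) auto
  show "(\<lambda>(I,A). (\<lambda>t\<in>D. comb N (I t) (A t))) ((\<lambda>X. (\<lambda>t\<in>D. map (\<lambda>x. x div N) (X t), \<lambda>t\<in>D. map (\<lambda>x. x mod N) (X t))) b) = b"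
    using b e by (auto simp: PiE_iff extensional_def fun_eq_iff)
  show "(\<lambda>X. (\<lambda>t\<in>D. map (\<lambda>x. x div N) (X t), \<lambda>t\<in>D. map (\<lambda>x. x mod N) (X t))) b \<in> (D \<rightarrow>\<^sub>E idx M p) \<times> (D \<rightarrow>\<^sub>E idx N p)"
    using b N by (auto simp: PiE_iff idx_def less_mult_imp_div_less subset_iff)
qed

definition phase :: "(nat \<Rightarrow> nat \<Rightarrow> complex) \<Rightarrow> nat \<Rightarrow> nat \<Rightarrow> nat \<Rightarrow> nat \<Rightarrow> complex" where
  "phase Q i j c d = Q i c * Q j d / (Q i d * Q j c)"

definition TV :: "nat \<Rightarrow> (nat \<Rightarrow> nat \<Rightarrow> complex) \<Rightarrow> bmat \<Rightarrow> nat \<Rightarrow> nat list \<Rightarrow> nat list \<Rightarrow> nat list \<Rightarrow> nat list \<Rightarrow> complex" where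
  "TV N Q V p is js as bs = (\<Sum>\<kappa>\<in>{..<p} \<rightarrow>\<^sub>E {..<N}. \<Prod>s<p. phase Q (is!s) (js!s) (\<kappa> s) (\<kappa> (Suc s mod p)) *
      V (as!s) (bs!s) (\<kappa> s) (\<kappa> (Suc s mod p))) / of_nat N"

lemma TW:
  assumes M: "0 < M" and N: "0 < N" and p: "0 < p"
    and I: "is \<in> idx M p" "js \<in> idx M p" and A: "as \<in> idx N p" "bs \<in> idx N p"
  shows "Tp (M*N) (deformed_tensor M N Q U V) p (comb N is as) (comb N js bs) = Tp M U p is js * TV N Q V p is js as bs"
proof -
  let ?W = "deformed_tensor M N Q U V"
  let ?c = "\<lambda>s. Suc s mod p"
  have len: "length is = p" "length js = p" "length as = p" "length bs = p"
    using I A by (auto simp: idx_def)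
  have aN: "as ! s < N" "bs ! s < N" if "s < p" for s
    using A that len nth_mem[of s as] nth_mem[of s bs] by (auto simp: idx_def subset_iff)
  have cp: "?c s < p" for s using p by simp
  let ?fU = "\<lambda>\<kappa>1. \<Prod>s<p. U (is!s) (js!s) (\<kappa>1 s) (\<kappa>1 (?c s))"
  let ?fV = "\<lambda>\<kappa>2. \<Prod>s<p. phase Q (is!s) (js!s) (\<kappa>2 s) (\<kappa>2 (?c s)) * V (as!s) (bs!s) (\<kappa>2 s) (\<kappa>2 (?c s))"
  have "Tp (M*N) ?W p (comb N is as) (comb N js bs) =
     (\<Sum>\<kappa>\<in>{..<p} \<rightarrow>\<^sub>E {..<M*N}. \<Prod>s<p. ?W (comb N is as ! s) (comb N js bs ! s) (\<kappa> s) (\<kappa> (?c s))) / of_nat (M*N)"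
    by (rule Tp_formula) (use len p in auto)
  also have "(\<Sum>\<kappa>\<in>{..<p} \<rightarrow>\<^sub>E {..<M*N}. \<Prod>s<p. ?W (comb N is as ! s) (comb N js bs ! s) (\<kappa> s) (\<kappa> (?c s)))
     = (\<Sum>(\<kappa>1,\<kappa>2)\<in>({..<p} \<rightarrow>\<^sub>E {..<M}) \<times> ({..<p} \<rightarrow>\<^sub>E {..<N}). \<Prod>s<p. ?W (comb N is as ! s) (comb N js bs ! s)
           ((\<lambda>s\<in>{..<p}. \<kappa>1 s * N + \<kappa>2 s) s) ((\<lambda>s\<in>{..<p}. \<kappa>1 s * N + \<kappa>2 s) (?c s)))"
    by (rule pair_fun_sum[OF N])
  also have "\<dots> = (\<Sum>(\<kappa>1,\<kappa>2)\<in>({..<p} \<rightarrow>\<^sub>E {..<M}) \<times> ({..<p} \<rightarrow>\<^sub>E {..<N}). ?fU \<kappa>1 * ?fV \<kappa>2)"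
  proof (rule sum.cong[OF refl])
    fix x assume x: "x \<in> ({..<p} \<rightarrow>\<^sub>E {..<M}) \<times> ({..<p} \<rightarrow>\<^sub>E {..<N})"
    obtain k1 k2 where x': "x = (k1, k2)" by (cases x)
    have k2: "k2 s < N" if "s < p" for s using x that unfolding x' by auto
    have "(\<Prod>s<p. ?W (comb N is as ! s) (comb N js bs ! s)
           ((\<lambda>s\<in>{..<p}. k1 s * N + k2 s) s) ((\<lambda>s\<in>{..<p}. k1 s * N + k2 s) (?c s)))
        = (\<Prod>s<p. U (is!s) (js!s) (k1 s) (k1 (?c s)) * (phase Q (is!s) (js!s) (k2 s) (k2 (?c s)) * V (as!s) (bs!s) (k2 s) (k2 (?c s))))"
    proof (rule prod.cong[OF refl])
      fix s assume s: "s \<in> {..<p}"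
      then have s': "s < p" by simp
      have "?W (comb N is as ! s) (comb N js bs ! s)
           ((\<lambda>s\<in>{..<p}. k1 s * N + k2 s) s) ((\<lambda>s\<in>{..<p}. k1 s * N + k2 s) (?c s))
          = ?W (is!s * N + as!s) (js!s * N + bs!s) (k1 s * N + k2 s) (k1 (?c s) * N + k2 (?c s))"
        using s' cp[of s] len by simp
      also have "\<dots> = U (is!s) (js!s) (k1 s) (k1 (?c s)) * (phase Q (is!s) (js!s) (k2 s) (k2 (?c s)) * V (as!s) (bs!s) (k2 s) (k2 (?c s)))"
        using aN[OF s'] k2[OF s'] k2[OF cp[of s]]
        by (simp add: deformed_tensor_def Let_def phase_def)
      finally show "?W (comb N is as ! s) (comb N js bs ! s)
           ((\<lambda>s\<in>{..<p}. k1 s * N + k2 s) s) ((\<lambda>s\<in>{..<p}. k1 s * N + k2 s) (?c s))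
          = U (is!s) (js!s) (k1 s) (k1 (?c s)) * (phase Q (is!s) (js!s) (k2 s) (k2 (?c s)) * V (as!s) (bs!s) (k2 s) (k2 (?c s)))" .
    qed
    then show "(case x of (\<kappa>1,\<kappa>2) \<Rightarrow> \<Prod>s<p. ?W (comb N is as ! s) (comb N js bs ! s)
           ((\<lambda>s\<in>{..<p}. \<kappa>1 s * N + \<kappa>2 s) s) ((\<lambda>s\<in>{..<p}. \<kappa>1 s * N + \<kappa>2 s) (?c s))) =
          (case x of (\<kappa>1,\<kappa>2) \<Rightarrow> ?fU \<kappa>1 * ?fV \<kappa>2)"
      unfolding x' by (simp add: prod.distrib)
  qed
  also have "\<dots> = (\<Sum>\<kappa>1\<in>{..<p} \<rightarrow>\<^sub>E {..<M}. ?fU \<kappa>1) * (\<Sum>\<kappa>2\<in>{..<p} \<rightarrow>\<^sub>E {..<N}. ?fV \<kappa>2)"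
    by (simp add: sum.cartesian_product[symmetric] sum_product)
  finally have "Tp (M*N) ?W p (comb N is as) (comb N js bs) =
     ((\<Sum>\<kappa>1\<in>{..<p} \<rightarrow>\<^sub>E {..<M}. ?fU \<kappa>1) / of_nat M) * ((\<Sum>\<kappa>2\<in>{..<p} \<rightarrow>\<^sub>E {..<N}. ?fV \<kappa>2) / of_nat N)"
    by simp
  also have "\<dots> = Tp M U p is js * TV N Q V p is js as bs"
    by (subst Tp_formula[OF len(1,2) p]) (simp add: TV_def)
  finally show ?thesis .
qed

lemma sum_prod_div:
  "(\<Sum>A\<in>S. \<Prod>t<r. X A t / (c::complex)) = (\<Sum>A\<in>S. \<Prod>t<r. X A t) / c ^ r"
  by (simp add: sum_divide_distrib prod_dividef)

definition Psi :: "nat \<Rightarrow> bmat \<Rightarrow> nat \<Rightarrow> nat \<Rightarrow> (nat \<Rightarrow> nat \<Rightarrow> nat) \<Rightarrow> complex" where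
  "Psi N V p r K = (\<Prod>s<p. \<Sum>\<alpha>\<in>{..<r} \<rightarrow>\<^sub>E {..<N}. \<Prod>t<r. V (\<alpha> t) (\<alpha> (Suc t mod r)) (K t s) (K t (Suc s mod p)))"

lemma K_formula:
  fixes ph :: "nat \<Rightarrow> nat \<Rightarrow> nat \<Rightarrow> nat \<Rightarrow> complex"
  assumes r: "0 < r"
  shows "(\<Sum>A\<in>{..<r} \<rightarrow>\<^sub>E idx N p. \<Prod>t<r. (\<Sum>\<kappa>\<in>{..<p} \<rightarrow>\<^sub>E {..<N}. \<Prod>s<p. ph t s (\<kappa> s) (\<kappa> (Suc s mod p)) *
            V (A t ! s) (A (Suc t mod r) ! s) (\<kappa> s) (\<kappa> (Suc s mod p))) / of_nat N)
       = (\<Sum>K\<in>{..<r} \<rightarrow>\<^sub>E ({..<p} \<rightarrow>\<^sub>E {..<N}). (\<Prod>t<r. \<Prod>s<p. ph t s (K t s) (K t (Suc s mod p))) * Psi N V p r K) / of_nat N ^ r"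
proof -
  let ?h = "\<lambda>A t \<kappa>. \<Prod>s<p. ph t s (\<kappa> s) (\<kappa> (Suc s mod p)) * V (A t ! s) (A (Suc t mod r) ! s) (\<kappa> s) (\<kappa> (Suc s mod p))"
  let ?Phi = "\<lambda>K. \<Prod>t<r. \<Prod>s<p. ph t s (K t s) (K t (Suc s mod p))"
  have "(\<Sum>A\<in>{..<r} \<rightarrow>\<^sub>E idx N p. \<Prod>t<r. (\<Sum>\<kappa>\<in>{..<p} \<rightarrow>\<^sub>E {..<N}. ?h A t \<kappa>) / of_nat N)
      = (\<Sum>A\<in>{..<r} \<rightarrow>\<^sub>E idx N p. (\<Prod>t<r. \<Sum>\<kappa>\<in>{..<p} \<rightarrow>\<^sub>E {..<N}. ?h A t \<kappa>)) / of_nat N ^ r"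
    by (rule sum_prod_div)
  also have "\<dots> = (\<Sum>A\<in>{..<r} \<rightarrow>\<^sub>E idx N p. \<Sum>K\<in>{..<r} \<rightarrow>\<^sub>E ({..<p} \<rightarrow>\<^sub>E {..<N}). \<Prod>t<r. ?h A t (K t)) / of_nat N ^ r"
    by (subst prod_sum_PiE) (auto intro: finite_PiE)
  also have "\<dots> = (\<Sum>K\<in>{..<r} \<rightarrow>\<^sub>E ({..<p} \<rightarrow>\<^sub>E {..<N}). \<Sum>A\<in>{..<r} \<rightarrow>\<^sub>E idx N p. \<Prod>t<r. ?h A t (K t)) / of_nat N ^ r"
    by (subst sum.swap) (rule refl)
  also have "\<dots> = (\<Sum>K\<in>{..<r} \<rightarrow>\<^sub>E ({..<p} \<rightarrow>\<^sub>E {..<N}). ?Phi K * Psi N V p r K) / of_nat N ^ r"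
  proof (intro arg_cong[where f="\<lambda>x. x / _"] sum.cong refl)
    fix K
    have "(\<Sum>A\<in>{..<r} \<rightarrow>\<^sub>E idx N p. \<Prod>t<r. ?h A t (K t))
        = (\<Sum>A\<in>{..<r} \<rightarrow>\<^sub>E idx N p. ?Phi K * (\<Prod>t<r. \<Prod>s<p. V (A t ! s) (A (Suc t mod r) ! s) (K t s) (K t (Suc s mod p))))"
      by (simp add: prod.distrib)
    also have "\<dots> = ?Phi K * (\<Sum>A\<in>{..<r} \<rightarrow>\<^sub>E idx N p. \<Prod>t<r. \<Prod>s<p. V (A t ! s) (A (Suc t mod r) ! s) (K t s) (K t (Suc s mod p)))"
      by (simp add: sum_distrib_left)
    also have "\<dots> = ?Phi K * Psi N V p r K"
      unfolding Psi_def
      using transpose_sum[OF r, of "\<lambda>t s a b. V a b (K t s) (K t (Suc s mod p))" p N] by simp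
    finally show "(\<Sum>A\<in>{..<r} \<rightarrow>\<^sub>E idx N p. \<Prod>t<r. ?h A t (K t)) = ?Phi K * Psi N V p r K" .
  qed
  finally show ?thesis .
qed

lemma cprW_expand:
  assumes M: "0 < M" and N: "0 < N" and p: "0 < p" and r: "0 < r"
  shows "cpr (M*N) (deformed_tensor M N Q U V) p r =
    (\<Sum>I\<in>{..<r} \<rightarrow>\<^sub>E idx M p. (\<Prod>t<r. Tp M U p (I t) (I (Suc t mod r))) *
      ((\<Sum>K\<in>{..<r} \<rightarrow>\<^sub>E ({..<p} \<rightarrow>\<^sub>E {..<N}).
          (\<Prod>t<r. \<Prod>s<p. phase Q (I t ! s) (I (Suc t mod r) ! s) (K t s) (K t (Suc s mod p))) * Psi N V p r K) / of_nat N ^ r))"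
proof -
  let ?W = "deformed_tensor M N Q U V"
  let ?R = "{..<r}"
  have cr: "Suc t mod r \<in> ?R" for t using r by simp
  have "cpr (M*N) ?W p r = (\<Sum>X\<in>?R \<rightarrow>\<^sub>E idx (M*N) p. \<Prod>t<r. Tp (M*N) ?W p (X t) (X (Suc t mod r)))"
    by (rule cpr_formula[OF r])
  also have "\<dots> = (\<Sum>(I,A)\<in>(?R \<rightarrow>\<^sub>E idx M p) \<times> (?R \<rightarrow>\<^sub>E idx N p).
       \<Prod>t<r. Tp (M*N) ?W p ((\<lambda>t\<in>?R. comb N (I t) (A t)) t) ((\<lambda>t\<in>?R. comb N (I t) (A t)) (Suc t mod r)))"
    by (rule pair_idx_sum[OF N])
  also have "\<dots> = (\<Sum>(I,A)\<in>(?R \<rightarrow>\<^sub>E idx M p) \<times> (?R \<rightarrow>\<^sub>E idx N p).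
       (\<Prod>t<r. Tp M U p (I t) (I (Suc t mod r))) * (\<Prod>t<r. TV N Q V p (I t) (I (Suc t mod r)) (A t) (A (Suc t mod r))))"
  proof (rule sum.cong[OF refl])
    fix x assume x: "x \<in> (?R \<rightarrow>\<^sub>E idx M p) \<times> (?R \<rightarrow>\<^sub>E idx N p)"
    obtain I A where x': "x = (I, A)" by (cases x)
    have "Tp (M*N) ?W p ((\<lambda>t\<in>?R. comb N (I t) (A t)) t) ((\<lambda>t\<in>?R. comb N (I t) (A t)) (Suc t mod r))
        = Tp M U p (I t) (I (Suc t mod r)) * TV N Q V p (I t) (I (Suc t mod r)) (A t) (A (Suc t mod r))" if t: "t \<in> ?R" for t
    proof -
      have "I t \<in> idx M p" "I (Suc t mod r) \<in> idx M p" "A t \<in> idx N p" "A (Suc t mod r) \<in> idx N p"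
      proof -
        have "I \<in> ?R \<rightarrow>\<^sub>E idx M p" "A \<in> ?R \<rightarrow>\<^sub>E idx N p" using x unfolding x' by auto
        then show "I t \<in> idx M p" "I (Suc t mod r) \<in> idx M p" "A t \<in> idx N p" "A (Suc t mod r) \<in> idx N p"
          using t cr[of t] by (auto simp del: lessThan_iff)
      qed
      then show ?thesis using t cr[of t] by (simp add: TW[OF M N p])
    qed
    then show "(case x of (I,A) \<Rightarrow> \<Prod>t<r. Tp (M*N) ?W p ((\<lambda>t\<in>?R. comb N (I t) (A t)) t) ((\<lambda>t\<in>?R. comb N (I t) (A t)) (Suc t mod r)))
      = (case x of (I,A) \<Rightarrow> (\<Prod>t<r. Tp M U p (I t) (I (Suc t mod r))) * (\<Prod>t<r. TV N Q V p (I t) (I (Suc t mod r)) (A t) (A (Suc t mod r))))"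
      unfolding x' by (simp add: prod.distrib[symmetric])
  qed
  also have "\<dots> = (\<Sum>I\<in>?R \<rightarrow>\<^sub>E idx M p. (\<Prod>t<r. Tp M U p (I t) (I (Suc t mod r))) *
       (\<Sum>A\<in>?R \<rightarrow>\<^sub>E idx N p. \<Prod>t<r. TV N Q V p (I t) (I (Suc t mod r)) (A t) (A (Suc t mod r))))"
    by (simp add: sum.cartesian_product[symmetric] sum_distrib_left)
  also have "\<dots> = (\<Sum>I\<in>{..<r} \<rightarrow>\<^sub>E idx M p. (\<Prod>t<r. Tp M U p (I t) (I (Suc t mod r))) *
      ((\<Sum>K\<in>{..<r} \<rightarrow>\<^sub>E ({..<p} \<rightarrow>\<^sub>E {..<N}).
          (\<Prod>t<r. \<Prod>s<p. phase Q (I t ! s) (I (Suc t mod r) ! s) (K t s) (K t (Suc s mod p))) * Psi N V p r K) / of_nat N ^ r))"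
  proof (rule sum.cong[OF refl])
    fix I
    show "(\<Prod>t<r. Tp M U p (I t) (I (Suc t mod r))) *
       (\<Sum>A\<in>?R \<rightarrow>\<^sub>E idx N p. \<Prod>t<r. TV N Q V p (I t) (I (Suc t mod r)) (A t) (A (Suc t mod r))) =
       (\<Prod>t<r. Tp M U p (I t) (I (Suc t mod r))) *
      ((\<Sum>K\<in>{..<r} \<rightarrow>\<^sub>E ({..<p} \<rightarrow>\<^sub>E {..<N}).
          (\<Prod>t<r. \<Prod>s<p. phase Q (I t ! s) (I (Suc t mod r) ! s) (K t s) (K t (Suc s mod p))) * Psi N V p r K) / of_nat N ^ r)"
      unfolding TV_def
      using K_formula[OF r, where ph="\<lambda>t s c d. phase Q (I t ! s) (I (Suc t mod r) ! s) c d" and N=N and p=p and V=V]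
      by simp
  qed
  finally show ?thesis .
qed

lemma cprV_expand:
  assumes N: "0 < N" and p: "0 < p" and r: "0 < r"
  shows "cpr N V p r = (\<Sum>K\<in>{..<r} \<rightarrow>\<^sub>E ({..<p} \<rightarrow>\<^sub>E {..<N}). Psi N V p r K) / of_nat N ^ r"
proof -
  have cr: "Suc t mod r < r" for t using r by simp
  have "cpr N V p r = (\<Sum>A\<in>{..<r} \<rightarrow>\<^sub>E idx N p. \<Prod>t<r. Tp N V p (A t) (A (Suc t mod r)))"
    by (rule cpr_formula[OF r])
  also have "\<dots> = (\<Sum>A\<in>{..<r} \<rightarrow>\<^sub>E idx N p. \<Prod>t<r. (\<Sum>\<kappa>\<in>{..<p} \<rightarrow>\<^sub>E {..<N}. \<Prod>s<p. (\<lambda>_ _ _ _. 1) t s (\<kappa> s) (\<kappa> (Suc s mod p)) *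
            V (A t ! s) (A (Suc t mod r) ! s) (\<kappa> s) (\<kappa> (Suc s mod p))) / of_nat N)"
  proof (intro sum.cong refl prod.cong)
    fix A t assume A: "A \<in> {..<r} \<rightarrow>\<^sub>E idx N p" and t: "t \<in> {..<r}"
    then have "length (A t) = p" "length (A (Suc t mod r)) = p" using cr[of t] by (auto simp: idx_def)
    then show "Tp N V p (A t) (A (Suc t mod r)) = (\<Sum>\<kappa>\<in>{..<p} \<rightarrow>\<^sub>E {..<N}. \<Prod>s<p. (\<lambda>_ _ _ _. 1) t s (\<kappa> s) (\<kappa> (Suc s mod p)) *
            V (A t ! s) (A (Suc t mod r) ! s) (\<kappa> s) (\<kappa> (Suc s mod p))) / of_nat N"
      using p by (simp add: Tp_formula)
  qed
  also have "\<dots> = (\<Sum>K\<in>{..<r} \<rightarrow>\<^sub>E ({..<p} \<rightarrow>\<^sub>E {..<N}). (\<Prod>t<r. \<Prod>s<p. (\<lambda>_ _ _ _. 1) t s (K t s) (K t (Suc s mod p))) * Psi N V p r K) / of_nat N ^ r"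
    using K_formula[OF r, where ph="\<lambda>_ _ _ _. 1" and N=N and p=p and V=V] by simp
  finally show ?thesis by simp
qed

lemma cprod_nonneg: "(\<And>x. x \<in> A \<Longrightarrow> 0 \<le> f x) \<Longrightarrow> 0 \<le> (\<Prod>x\<in>A. f x :: complex)"
  by (induction A rule: infinite_finite_induct) (auto intro: mult_nonneg_nonneg simp: less_eq_complex_def)

lemma cnn_norm: "0 \<le> (z::complex) \<Longrightarrow> norm z = Re z"
  by (simp add: less_eq_complex_def cmod_eq_Re)

lemma cnn_intro: "z \<in> \<real> \<Longrightarrow> 0 \<le> Re z \<Longrightarrow> 0 \<le> (z::complex)"
  by (simp add: less_eq_complex_def complex_is_Real_iff)

lemma cnn_of_nat: "0 \<le> (of_nat n :: complex)"
  by (simp add: less_eq_complex_def)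

lemma norm_phase:
  assumes "norm (Q i c) = 1" "norm (Q j d) = 1" "norm (Q i d) = 1" "norm (Q j c) = 1"
  shows "norm (phase Q i j c d) = 1"
  using assms by (simp add: phase_def norm_mult norm_divide)

lemma Psi_nonneg:
  assumes pos: "positive_model N (prime_model V)" and N: "0 < N" and r: "0 < r"
    and K: "K \<in> {..<r} \<rightarrow>\<^sub>E ({..<p} \<rightarrow>\<^sub>E {..<N})"
  shows "0 \<le> Psi N V p r K"
  unfolding Psi_def
proof (rule cprod_nonneg)
  fix s assume s: "s \<in> {..<p}"
  then have p: "0 < p" by auto
  let ?is = "map (\<lambda>t. K t s) [0..<r]" and ?js = "map (\<lambda>t. K t (Suc s mod p)) [0..<r]"
  have Kb: "K t s < N" "K t (Suc s mod p) < N" if "t < r" for t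
    using K that s p by (auto simp: PiE_iff)
  have idx: "?is \<in> idx N r" "?js \<in> idx N r" using Kb by (auto simp: idx_def)
  have T: "Tp N (prime_model V) r ?is ?js = (\<Sum>\<alpha>\<in>{..<r} \<rightarrow>\<^sub>E {..<N}. \<Prod>t<r. V (\<alpha> t) (\<alpha> (Suc t mod r)) (K t s) (K t (Suc s mod p))) / of_nat N"
    by (subst Tp_formula) (use r in \<open>auto simp: prime_model_def intro!: sum.cong prod.cong arg_cong[where f="\<lambda>x. x / _"]\<close>)
  have "0 \<le> Tp N (prime_model V) r ?is ?js"
    using pos idx unfolding positive_model_def Tp_def by (intro cnn_intro) auto
  then have "0 \<le> of_nat N * Tp N (prime_model V) r ?is ?js"
    by (intro mult_nonneg_nonneg cnn_of_nat)
  also have "of_nat N * Tp N (prime_model V) r ?is ?js = (\<Sum>\<alpha>\<in>{..<r} \<rightarrow>\<^sub>E {..<N}. \<Prod>t<r. V (\<alpha> t) (\<alpha> (Suc t mod r)) (K t s) (K t (Suc s mod p)))"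
    unfolding T using N by simp
  finally show "0 \<le> (\<Sum>\<alpha>\<in>{..<r} \<rightarrow>\<^sub>E {..<N}. \<Prod>t<r. V (\<alpha> t) (\<alpha> (Suc t mod r)) (K t s) (K t (Suc s mod p)))" .
qed


lemma cnn_real: "0 \<le> (z::complex) \<Longrightarrow> z = of_real (Re z)"
  by (simp add: less_eq_complex_def complex_eq_iff)

lemma idx_nth: "xs \<in> idx n p \<Longrightarrow> s < p \<Longrightarrow> xs ! s < n"
  by (auto simp: idx_def dest!: nth_mem)

theorem theorem2p9:
  fixes M N :: nat and U V :: bmat and Q :: "nat \<Rightarrow> nat \<Rightarrow> complex" and p r :: nat
  assumes "M \<ge> 1" and "N \<ge> 1"
    and "projective_model M U" and "projective_model N V"
    and "positive_model M U" and "positive_model N (prime_model V)"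
    and "\<forall>i<M. \<forall>c<N. norm (Q i c) = 1"
    and "p \<ge> 1" and "r \<ge> 1"
  shows "cpr M U p r * cpr N V p r \<in> \<real> \<and>
         norm (cpr (M * N) (deformed_tensor M N Q U V) p r)
           \<le> Re (cpr M U p r * cpr N V p r)"
proof -
  have M0: "0 < M" and N0: "0 < N" and p0: "0 < p" and r0: "0 < r" using assms by auto
  have posU: "positive_model M U" and posV: "positive_model N (prime_model V)"
    and Qn: "\<forall>i<M. \<forall>c<N. norm (Q i c) = 1" using assms by auto
  let ?KS = "{..<r} \<rightarrow>\<^sub>E ({..<p} \<rightarrow>\<^sub>E {..<N})"
  let ?IS = "{..<r} \<rightarrow>\<^sub>E idx M p"
  let ?TU = "\<lambda>I. \<Prod>t<r. Tp M U p (I t) (I (Suc t mod r))"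
  let ?Phi = "\<lambda>I K. \<Prod>t<r. \<Prod>s<p. phase Q (I t ! s) (I (Suc t mod r) ! s) (K t s) (K t (Suc s mod p))"
  let ?G = "\<lambda>I. (\<Sum>K\<in>?KS. ?Phi I K * Psi N V p r K) / of_nat N ^ r"
  have cr: "Suc t mod r < r" for t using r0 by simp
  have cp: "Suc s mod p < p" for s using p0 by simp
  have W: "cpr (M*N) (deformed_tensor M N Q U V) p r = (\<Sum>I\<in>?IS. ?TU I * ?G I)"
    by (rule cprW_expand[OF M0 N0 p0 r0])
  have Vx: "cpr N V p r = (\<Sum>K\<in>?KS. Psi N V p r K) / of_nat N ^ r"
    by (rule cprV_expand[OF N0 p0 r0])
  have Ux: "cpr M U p r = (\<Sum>I\<in>?IS. ?TU I)"
    by (rule cpr_formula[OF r0])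
  have TUnn: "0 \<le> ?TU I" if I: "I \<in> ?IS" for I
  proof (rule cprod_nonneg)
    fix t assume t: "t \<in> {..<r}"
    have "I t \<in> idx M p" "I (Suc t mod r) \<in> idx M p" using I t cr[of t] by (auto simp del: lessThan_iff)
    then show "0 \<le> Tp M U p (I t) (I (Suc t mod r))"
      using posU unfolding positive_model_def Tp_def by (intro cnn_intro) auto
  qed
  have Unn: "0 \<le> cpr M U p r" unfolding Ux by (rule sum_nonneg) (use TUnn in auto)
  have Psinn: "0 \<le> Psi N V p r K" if "K \<in> ?KS" for K
    by (rule Psi_nonneg[OF posV N0 r0 that])
  define cv where "cv = (\<Sum>K\<in>?KS. Re (Psi N V p r K)) / real N ^ r"
  have "(\<Sum>K\<in>?KS. Psi N V p r K) = (\<Sum>K\<in>?KS. complex_of_real (Re (Psi N V p r K)))"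
    by (intro sum.cong refl cnn_real Psinn)
  then have Vcv: "cpr N V p r = complex_of_real cv"
    unfolding Vx cv_def by simp
  have cv0: "0 \<le> cv" unfolding cv_def
    using Psinn by (intro divide_nonneg_nonneg sum_nonneg) (auto simp: less_eq_complex_def)
  have Vnn: "0 \<le> cpr N V p r" using cv0 unfolding Vcv by (simp add: less_eq_complex_def)
  have conj1: "cpr M U p r * cpr N V p r \<in> \<real>"
    by (rule nonnegative_complex_is_real) (intro mult_nonneg_nonneg Unn Vnn)
  have Gb: "norm (?G I) \<le> cv" if I: "I \<in> ?IS" for I
  proof -
    have Phi1: "norm (?Phi I K) = 1" if K: "K \<in> ?KS" for K
    proof -
      have "norm (?Phi I K) = (\<Prod>t<r. \<Prod>s<p. norm (phase Q (I t ! s) (I (Suc t mod r) ! s) (K t s) (K t (Suc s mod p))))"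
        by (simp add: prod_norm)
      also have "\<dots> = (\<Prod>t<r. \<Prod>s<p. (1::real))"
      proof (intro prod.cong refl)
        fix t s assume t: "t \<in> {..<r}" and s: "s \<in> {..<p}"
        have "I t \<in> idx M p" "I (Suc t mod r) \<in> idx M p" using I t cr[of t] by (auto simp del: lessThan_iff)
        then have a: "I t ! s < M" "I (Suc t mod r) ! s < M" using s by (auto intro: idx_nth)
        have b: "K t s < N" "K t (Suc s mod p) < N" using K t s cp[of s] by (auto simp: PiE_iff)
        show "norm (phase Q (I t ! s) (I (Suc t mod r) ! s) (K t s) (K t (Suc s mod p))) = 1"
          using a b Qn by (intro norm_phase) auto
      qed
      finally show ?thesis by simp
    qed
    have "norm (\<Sum>K\<in>?KS. ?Phi I K * Psi N V p r K) \<le> (\<Sum>K\<in>?KS. norm (?Phi I K * Psi N V p r K))"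
      by (rule norm_sum)
    also have "\<dots> = (\<Sum>K\<in>?KS. Re (Psi N V p r K))"
      by (intro sum.cong refl) (simp add: norm_mult Phi1 cnn_norm Psinn)
    finally have "norm (\<Sum>K\<in>?KS. ?Phi I K * Psi N V p r K) / real N ^ r \<le> cv"
      unfolding cv_def by (intro divide_right_mono) auto
    then show ?thesis by (simp add: norm_divide norm_power)
  qed
  have "norm (cpr (M*N) (deformed_tensor M N Q U V) p r) \<le> (\<Sum>I\<in>?IS. norm (?TU I * ?G I))"
    unfolding W by (rule norm_sum)
  also have "\<dots> \<le> (\<Sum>I\<in>?IS. Re (?TU I) * cv)"
  proof (rule sum_mono)
    fix I assume I: "I \<in> ?IS"
    have "norm (?TU I * ?G I) = Re (?TU I) * norm (?G I)"
      by (subst norm_mult) (simp only: cnn_norm[OF TUnn[OF I]])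
    also have "\<dots> \<le> Re (?TU I) * cv"
      using TUnn[OF I] Gb[OF I] by (intro mult_left_mono) (auto simp: less_eq_complex_def)
    finally show "norm (?TU I * ?G I) \<le> Re (?TU I) * cv" .
  qed
  also have "\<dots> = Re (cpr M U p r) * cv"
    unfolding Ux by (simp add: sum_distrib_right)
  also have "\<dots> = Re (cpr M U p r * cpr N V p r)"
    unfolding Vcv by simp
  finally show ?thesis using conj1 by simp
qed

end
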